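(* Let $r\ge3$ be odd. For any $n\ge r-1$ and $A>0$, there exists $f\in C^r[-1,1]$, identically $0$ on $[-1,-1/2]$ and nonnegative on $[-1,1]$, such that every algebraic polynomial $P_n$ of degree $\le n$ which is nonnegative on $[-1/2,1/2]$ and satisfies $P_n^{(i)}(0)=f^{(i)}(0)$ for $0\le i\le r-1$ obeys $$\|f-P_n\|>A\,\|f^{(r)}\|.$$
   Context: $\|\cdot\|$ is the sup norm on $[-1,1]$. *)

theory Defs
  imports "HOL-Analysis.Analysis" "HOL-Computational_Algebra.Polynomial"
begin

text \<open>D is a family of successive derivatives on [-1,1] certifying that D 0 is in C^r[-1,1]:
  D (Suc i) is the derivative (one-sided at the endpoints) of D i on [-1,1] for i < r,
  and D r is continuous on [-1,1].\<close>
definition Cr_derivs :: "nat \<Rightarrow> (nat \<Rightarrow> real \<Rightarrow> real) \<Rightarrow> bool" where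
  "Cr_derivs r D \<longleftrightarrow>
     (\<forall>i<r. \<forall>x\<in>{-1..1}. (D i has_real_derivative D (Suc i) x) (at x within {-1..1}))
     \<and> continuous_on {-1..1} (D r)"

definition supnorm :: "(real \<Rightarrow> real) \<Rightarrow> real" where
  "supnorm g = (SUP x\<in>{-1..1}. \<bar>g x\<bar>)"

end

theory Submission
  imports Defs
begin


lemma lagrange_interp:
  fixes t :: "nat \<Rightarrow> real" and q :: "real poly"
  assumes inj: "inj_on t {..m}" and dq: "degree q \<le> m"
  shows "poly q x = (\<Sum>j\<le>m. poly q (t j) * (\<Prod>l\<in>{..m}-{j}. (x - t l)/(t j - t l)))"
proof -
  define Lp where "Lp j = (\<Prod>l\<in>{..m}-{j}. smult (1/(t j - t l)) [:-t l, 1:])" for j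
  have pL: "poly (Lp j) z = (\<Prod>l\<in>{..m}-{j}. (z - t l)/(t j - t l))" for j z
    unfolding Lp_def poly_prod by (intro prod.cong) (auto simp: diff_divide_distrib)
  have dL: "degree (Lp j) \<le> m" if "j \<le> m" for j
  proof -
    have "degree (Lp j) \<le> sum (degree \<circ> (\<lambda>l. smult (1/(t j - t l)) [:-t l, 1:])) ({..m}-{j})"
      unfolding Lp_def by (rule degree_prod_sum_le) auto
    also have "\<dots> \<le> sum (\<lambda>l. 1) ({..m}-{j})"
      by (intro sum_mono) auto
    also have "\<dots> \<le> m" by (use that in \<open>auto simp: card_Diff_singleton\<close>)
    finally show ?thesis .
  qed
  define R where "R = (\<Sum>j\<le>m. smult (poly q (t j)) (Lp j))"
  have dR: "degree R \<le> m" unfolding R_def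
    by (intro degree_sum_le) (auto intro!: order.trans[OF degree_smult_le] dL)
  have delta: "poly (Lp j) (t i) = (if i = j then 1 else 0)" if "i \<le> m" "j \<le> m" for i j
  proof (cases "i = j")
    case True
    have "t j - t l \<noteq> 0" if "l \<in> {..m}-{j}" for l
      using inj that \<open>j \<le> m\<close> by (auto dest: inj_onD)
    then show ?thesis using True by (simp add: pL)
  next
    case False
    then have "i \<in> {..m}-{j}" using that by auto
    then show ?thesis using False unfolding pL
      by (intro trans[OF prod_zero]) auto
  qed
  have ev: "poly q (t i) = poly R (t i)" if "i \<in> {..m}" for i
  proof -
    have "poly R (t i) = (\<Sum>j\<le>m. poly q (t j) * (if i = j then 1 else 0))"
      unfolding R_def poly_sum using that by (intro sum.cong) (auto simp: delta)
    also have "\<dots> = poly q (t i)" using that by (simp add: if_distrib[where f="\<lambda>z. poly q (t _) * z"] cong: if_cong)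
    finally show ?thesis by simp
  qed
  have card: "card (t ` {..m}) = Suc m" using inj by (simp add: card_image)
  have "q = R"
    by (rule poly_eqI_degree[of "t ` {..m}"]) (use ev card dq dR in auto)
  then have "poly q x = poly R x" by simp
  also have "\<dots> = (\<Sum>j\<le>m. poly q (t j) * (\<Prod>l\<in>{..m}-{j}. (x - t l)/(t j - t l)))"
    unfolding R_def poly_sum by (simp add: pL)
  finally show ?thesis .
qed



lemma deriv_squeeze:
  fixes g h :: "real \<Rightarrow> real"
  assumes "(h has_real_derivative 0) (at x)" "h x = 0" "g x = 0" "\<And>z. \<bar>g z\<bar> \<le> \<bar>h z\<bar>"
  shows "(g has_real_derivative 0) (at x)"
proof -
  have "((\<lambda>z. (h z - h x)/(z - x)) \<longlongrightarrow> 0) (at x)"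
    using assms(1) by (simp add: has_field_derivative_iff)
  hence "((\<lambda>z. \<bar>(h z - h x)/(z-x)\<bar>) \<longlongrightarrow> 0) (at x)" by (rule tendsto_rabs_zero)
  hence "((\<lambda>z. (g z - g x)/(z-x)) \<longlongrightarrow> 0) (at x)"
  proof (rule Lim_null_comparison[rotated])
    show "\<forall>\<^sub>F z in at x. norm ((g z - g x) / (z - x)) \<le> \<bar>(h z - h x) / (z - x)\<bar>"
      using assms(2,3,4) by (intro always_eventually allI) (simp add: abs_divide divide_right_mono)
  qed
  thus ?thesis by (simp add: has_field_derivative_iff)
qed

lemma cutoff_deriv:
  fixes G0 G1 :: "real \<Rightarrow> real"
  assumes d: "\<And>x. (G0 has_real_derivative G1 x) (at x)" and y: "y > 0"
    and z: "G0 y = 0" "G0 (-y) = 0" "G1 y = 0" "G1 (-y) = 0"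
  shows "((\<lambda>x. if \<bar>x\<bar> < y then G0 x else 0) has_real_derivative
           (if \<bar>x\<bar> < y then G1 x else 0)) (at x)"
proof -
  consider "\<bar>x\<bar> < y" | "\<bar>x\<bar> > y" | "\<bar>x\<bar> = y" by linarith
  then show ?thesis
  proof cases
    case 1
    have "(G0 has_real_derivative G1 x) (at x)" by (rule d)
    then have "((\<lambda>x. if \<bar>x\<bar> < y then G0 x else 0) has_real_derivative G1 x) (at x)"
      by (rule has_field_derivative_transform_within_open[where S="{-y<..<y}"]) (use 1 in auto)
    then show ?thesis using 1 by simp
  next
    case 2
    have o: "open {z::real. y < \<bar>z\<bar>}"
      by (rule open_Collect_less) (auto intro: continuous_intros)
    have "((\<lambda>_. 0::real) has_real_derivative 0) (at x)" by simp
    then have "((\<lambda>x. if \<bar>x\<bar> < y then G0 x else 0) has_real_derivative 0) (at x)"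
      by (rule has_field_derivative_transform_within_open[OF _ o]) (use 2 in auto)
    then show ?thesis using 2 by simp
  next
    case 3
    then have xs: "x = y \<or> x = -y" by linarith
    have "(G0 has_real_derivative 0) (at x)" using d[of x] xs z by auto
    then have "((\<lambda>x. if \<bar>x\<bar> < y then G0 x else 0) has_real_derivative 0) (at x)"
      by (rule deriv_squeeze) (use xs z in auto)
    then show ?thesis using 3 by simp
  qed
qed

lemma higher_pderiv_root:
  fixes p :: "real poly"
  assumes "[:-a,1:]^k dvd p" "i < k"
  shows "poly ((pderiv^^i) p) a = 0"
proof -
  have "\<forall>i\<le>k. [:-a,1:]^(k-i) dvd (pderiv^^i) p"
  proof (intro allI impI)
    fix i assume "i \<le> k"
    then show "[:-a,1:]^(k-i) dvd (pderiv^^i) p"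
    proof (induction i)
      case 0 then show ?case using assms by simp
    next
      case (Suc i)
      then obtain u where u: "(pderiv^^i) p = [:-a,1:]^(k-i) * u" by (auto elim: dvdE)
      have kk: "k - i = Suc (k - Suc i)" using Suc.prems by simp
      have "(pderiv^^Suc i) p = pderiv ([:-a,1:]^(k-i) * u)" using u by simp
      also have "\<dots> = [:-a,1:]^(k - Suc i) * (smult (of_nat (k-i)) u + [:-a,1:] * pderiv u)"
        unfolding kk pderiv_mult pderiv_power_Suc by (simp add: pderiv_pCons algebra_simps)
      finally show ?case by simp
    qed
  qed
  then have "[:-a,1:]^(k-i) dvd (pderiv^^i) p" using assms(2) by simp
  then obtain u where u: "(pderiv^^i) p = [:-a,1:]^(k-i) * u" by (auto elim: dvdE)
  show ?thesis using assms(2) by (simp add: u)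
qed

lemma poly_higher_pderiv_0: "poly ((pderiv^^i) p) 0 = fact i * coeff p (i::nat)" for p :: "real poly"
  by (simp add: poly_0_coeff_0 coeff_higher_pderiv pochhammer_fact)



lemma G_coeffs:
  "coeff ([:1,0,-1:]^k :: real poly) 0 = 1 \<and> coeff ([:1,0,-1:]^k :: real poly) 1 = 0 \<and>
   coeff ([:1,0,-1:]^k :: real poly) 2 = - real k"
proof (induction k)
  case 0 then show ?case by simp
next
  case (Suc k)
  have e: "[:1,0,-1:]^Suc k = [:1,0,-1:] * ([:1,0,-1:]^k :: real poly)" by simp
  have c: "coeff ([:1,0,-1:] * (f::real poly)) j = coeff f j - (if j \<ge> 2 then coeff f (j-2) else 0)" for f j
    by (cases j; cases "j - 1") (auto simp: mult_pCons_left coeff_pCons split: nat.splits)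
  show ?case unfolding e c using Suc by simp
qed

lemma H_dvd:
  "[:-1,1:]^k dvd (monom 1 s * [:1,0,-1:]^k :: real poly)"
  "[:-(-1),1:]^k dvd (monom 1 s * [:1,0,-1:]^k :: real poly)"
proof -
  have e: "[:1,0,-1:] = smult (-1) ([:-1,1:] * [:1,1:] :: real poly)" by simp
  have "(monom 1 s * [:1,0,-1:]^k :: real poly) = [:-1,1:]^k * (smult ((-1)^k) (monom 1 s * [:1,1:]^k))"
    unfolding e smult_power power_mult_distrib by (simp add: algebra_simps)
  then show "[:-1,1:]^k dvd (monom 1 s * [:1,0,-1:]^k :: real poly)" by (metis dvd_triv_left)
  have "(monom 1 s * [:1,0,-1:]^k :: real poly) = [:1,1:]^k * (smult ((-1)^k) (monom 1 s * [:-1,1:]^k))"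
    unfolding e smult_power power_mult_distrib by (simp add: algebra_simps)
  then show "[:-(-1),1:]^k dvd (monom 1 s * [:1,0,-1:]^k :: real poly)" by (metis dvd_triv_left minus_minus)
qed

lemma H_poly: "poly (monom 1 s * [:1,0,-1:]^k :: real poly) t = t^s * (1 - t^2)^k"
  by (simp add: poly_monom poly_power power2_eq_square)

lemma H_coeff:
  assumes "j < s + 3"
  shows "coeff (monom 1 s * [:1,0,-1:]^k :: real poly) j =
           (if j = s then 1 else if j = s + 2 then - real k else 0)"
proof -
  have "j < s \<or> j = s \<or> j = s + 1 \<or> j = s + 2" using assms by linarith
  then show ?thesis using G_coeffs[of k] by (auto simp: coeff_monom_mult)
qed

theorem lemma3p8:
  fixes r n :: nat and A :: real
  assumes "odd r" and "r \<ge> 3" and "n \<ge> r - 1" and "A > 0"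
  shows "\<exists>D :: nat \<Rightarrow> real \<Rightarrow> real.
           Cr_derivs r D
         \<and> (\<forall>x\<in>{-1..-1/2}. D 0 x = 0)
         \<and> (\<forall>x\<in>{-1..1}. D 0 x \<ge> 0)
         \<and> (\<forall>p :: real poly.
              degree p \<le> n
            \<and> (\<forall>x\<in>{-1/2..1/2}. poly p x \<ge> 0)
            \<and> (\<forall>i<r. poly ((pderiv ^^ i) p) 0 = D i 0)
            \<longrightarrow> supnorm (\<lambda>x. D 0 x - poly p x) > A * supnorm (D r))"
proof -
  define s where "s = r - 3"
  define k where "k = r + 2"
  define c where "c = s + 2*k"
  define H :: "real poly" where "H = monom 1 s * [:1,0,-1:]^k"
  have rs: "r = s + 3" using assms by (simp add: s_def)
  have s_even: "even s" using assms(1) rs by simp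
  have "bounded (poly ((pderiv^^r) H) ` {-1..1})"
    by (intro compact_imp_bounded compact_continuous_image) (auto intro: continuous_intros)
  then obtain K where K: "K > 0" "\<forall>t\<in>{-1..1}. \<bar>poly ((pderiv^^r) H) t\<bar> \<le> K"
    unfolding bounded_pos by auto
  define \<epsilon> where "\<epsilon> = 1/(2^r * (A*K + 1 + real k))"
  have AK: "A*K + 1 + real k > 0" using mult_pos_pos[OF assms(4) K(1)] by linarith
  have \<epsilon>: "\<epsilon> > 0" unfolding \<epsilon>_def using AK by simp
  define t where "t j = 1/2 + real j/(2*real n + 2)" for j :: nat
  define L where "L j z = (\<Prod>l\<in>{..n}-{j}. (z - t l)/(t j - t l))" for j z
  define \<Phi> where "\<Phi> z = (\<Sum>j\<le>n. \<bar>L j z - L j (-z)\<bar>)" for z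
  have "isCont \<Phi> 0" unfolding \<Phi>_def L_def divide_inverse
    by (intro continuous_intros)
  moreover have "\<Phi> 0 = 0" by (simp add: \<Phi>_def)
  ultimately obtain \<delta> where \<delta>: "\<delta> > 0" "\<forall>z. dist z 0 < \<delta> \<longrightarrow> dist (\<Phi> z) (\<Phi> 0) < \<epsilon>"
    unfolding continuous_at_eps_delta using \<epsilon> by metis
  define y where "y = min (\<delta>/2) (1/4)"
  have y01: "0 < y" "y < 1/2" "y < \<delta>" using \<delta> by (auto simp: y_def)
  have "\<bar>\<Phi> y\<bar> < \<epsilon>" using \<delta>(2) y01 \<open>\<Phi> 0 = 0\<close> by (auto simp: dist_real_def)
  then have y: "0 < y" "y < 1/2" "\<Phi> y < \<epsilon>" using y01 by auto
  define g where "g i x = y^c / y^i * poly ((pderiv^^i) H) (x/y)" for i x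
  define D where "D i x = (if \<bar>x\<bar> < y then g i x else 0)" for i x
  have gd: "(g i has_real_derivative g (Suc i) x) (at x)" for i x
  proof -
    have "((\<lambda>x. poly ((pderiv^^i) H) (x/y)) has_real_derivative
            poly (pderiv ((pderiv^^i) H)) (x/y) * (1/y)) (at x)"
      by (rule DERIV_chain2[OF poly_DERIV]) (use y in \<open>auto intro!: derivative_eq_intros\<close>)
    then have "(g i has_real_derivative y^c / y^i * (poly (pderiv ((pderiv^^i) H)) (x/y) * (1/y))) (at x)"
      unfolding g_def by (rule DERIV_cmult)
    then show ?thesis unfolding g_def using y by (simp add: field_simps)
  qed
  have gz: "g i y = 0 \<and> g i (-y) = 0" if "i \<le> r + 1" for i
  proof -
    have "i < k" using that by (simp add: k_def)
    then have "poly ((pderiv^^i) H) 1 = 0" "poly ((pderiv^^i) H) (-1) = 0"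
      using higher_pderiv_root[OF H_dvd(1)] higher_pderiv_root[OF H_dvd(2)] unfolding H_def by auto
    then show ?thesis using y by (simp add: g_def)
  qed
  have Dd: "(D i has_real_derivative D (Suc i) x) (at x)" if "i \<le> r" for i x
    unfolding D_def by (rule cutoff_deriv[OF gd]) (use y gz[of i] gz[of "Suc i"] that in auto)
  have Cr: "Cr_derivs r D"
    unfolding Cr_derivs_def
  proof
    show "\<forall>i<r. \<forall>x\<in>{-1..1}. (D i has_real_derivative D (Suc i) x) (at x within {-1..1})"
      using Dd by (auto intro: has_field_derivative_at_within)
    show "continuous_on {-1..1} (D r)"
      by (rule continuous_at_imp_continuous_on) (use Dd[of r] DERIV_isCont in blast)
  qed
  have Z: "\<forall>x\<in>{-1..-1/2}. D 0 x = 0" using y by (auto simp: D_def)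
  have N: "\<forall>x\<in>{-1..1}. D 0 x \<ge> 0"
  proof
    fix x :: real assume "x \<in> {-1..1}"
    show "D 0 x \<ge> 0"
    proof (cases "\<bar>x\<bar> < y")
      case True
      then have "\<bar>x/y\<bar> < 1" using y by (simp add: abs_divide)
      then have "(x/y)^2 \<le> 1" by (metis abs_ge_zero less_imp_le power2_abs power_le_one)
      moreover have "(x/y)^s \<ge> 0" using s_even by (simp add: zero_le_even_power)
      moreover have "D 0 x = y^c * ((x/y)^s * (1 - (x/y)^2)^k)"
        using True by (simp only: D_def g_def H_def H_poly if_True funpow_0) simp
      ultimately show ?thesis using y by simp
    qed (simp add: D_def)
  qed
  have main: "supnorm (\<lambda>x. D 0 x - poly p x) > A * supnorm (D r)"
    if p: "degree p \<le> n" "\<forall>x\<in>{-1/2..1/2}. poly p x \<ge> 0"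
      "\<forall>i<r. poly ((pderiv ^^ i) p) 0 = D i 0" for p :: "real poly"
  proof -
    have hcoef: "coeff p i = y^c / y^i * coeff H i" if "i < r" for i
    proof -
      have "fact i * coeff p i = D i 0" using p(3) that by (simp add: poly_higher_pderiv_0)
      also have "\<dots> = y^c / y^i * (fact i * coeff H i)"
        using y by (simp add: D_def g_def poly_higher_pderiv_0)
      also have "\<dots> = fact i * (y^c / y^i * coeff H i)" by simp
      finally show ?thesis by (metis fact_nonzero mult_cancel_left)
    qed
    define q where "q = poly_shift r p"
    define \<beta> where "\<beta> = y^c / y^r"
    have \<beta>: "\<beta> > 0" using y by (simp add: \<beta>_def)
    have a0: "y^c / y^s = \<beta> * y^3" and a2: "y^c / y^(s+2) = \<beta> * y"
      using y by (simp_all add: \<beta>_def rs power_add field_simps power3_eq_cube)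
    have pc: "poly_cutoff r p = monom (\<beta> * y^3) s + monom (- real k * (\<beta> * y)) (s+2)"
    proof (rule poly_eqI)
      fix j
      show "coeff (poly_cutoff r p) j = coeff (monom (\<beta> * y^3) s + monom (- real k * (\<beta> * y)) (s+2)) j"
      proof (cases "j < r")
        case True
        have "j < s \<or> j = s \<or> j = s + 1 \<or> j = s + 2" using True rs by linarith
        moreover have "coeff p j = y^c / y^j * coeff H j" using hcoef[OF True] .
        ultimately show ?thesis using H_coeff[of j s k] a0 a2 True
          by (auto simp: coeff_poly_cutoff H_def rs coeff_monom simp del: times_divide_eq_left times_divide_eq_right)
      qed (auto simp: coeff_poly_cutoff rs coeff_monom)
    qed
    have pq: "p = poly_cutoff r p + monom 1 r * q"
      by (rule poly_eqI) (auto simp: coeff_poly_cutoff coeff_monom_mult q_def coeff_poly_shift)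
    have split: "poly p x = \<beta> * y^3 * x^s - real k * \<beta> * y * x^(s+2) + x^r * poly q x" for x
      by (subst pq) (simp add: pc poly_monom)
    have yr: "y^r > 0" using y by simp
    have pm: "0 \<le> X" if "0 \<le> y^r * X" for X
      using that yr by (metis mult_zero_right mult_le_cancel_left_pos)
    have q_y: "poly q y \<ge> (real k - 1) * \<beta>"
    proof -
      have "0 \<le> poly p y" using p(2) y by auto
      also have "poly p y = y^r * (poly q y - (real k - 1) * \<beta>)"
        unfolding split by (simp add: rs power_add algebra_simps power3_eq_cube)
      finally have "0 \<le> y^r * (poly q y - (real k - 1) * \<beta>)" .
      from pm[OF this] show ?thesis by simp
    qed
    have q_my: "poly q (-y) \<le> - (real k - 1) * \<beta>"
    proof -
      have "0 \<le> poly p (-y)" using p(2) y by auto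
      also have "poly p (-y) = y^r * (- (real k - 1) * \<beta> - poly q (-y))"
        unfolding split using s_even assms(1) by (simp add: rs power_add algebra_simps power3_eq_cube)
      finally have "0 \<le> y^r * (- (real k - 1) * \<beta> - poly q (-y))" .
      from pm[OF this] show ?thesis by simp
    qed
    have dq: "degree q \<le> n"
      by (rule degree_le) (use p(1) in \<open>auto simp: q_def coeff_poly_shift intro!: coeff_eq_0\<close>)
    have inj: "inj_on t {..n}" by (rule inj_onI) (auto simp: t_def field_simps)
    have lag: "poly q z = (\<Sum>j\<le>n. poly q (t j) * L j z)" for z
      unfolding L_def by (rule lagrange_interp[OF inj dq])
    have diff: "poly q y - poly q (-y) = (\<Sum>j\<le>n. poly q (t j) * (L j y - L j (-y)))"
      unfolding lag[of y] lag[of "-y"] by (simp add: sum_subtractf algebra_simps)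
    define E where "E = supnorm (\<lambda>x. D 0 x - poly p x)"
    have Dcont: "continuous_on {-1..1} (D 0)"
      by (rule continuous_at_imp_continuous_on) (use Dd[of 0] DERIV_isCont in blast)
    have bdd: "bdd_above ((\<lambda>x. \<bar>D 0 x - poly p x\<bar>) ` {-1..1})"
    proof -
      have "continuous_on {-1..1} (\<lambda>x. \<bar>D 0 x - poly p x\<bar>)"
        by (intro continuous_intros Dcont)
      then have "compact ((\<lambda>x. \<bar>D 0 x - poly p x\<bar>) ` {-1..1})"
        by (rule compact_continuous_image) simp
      then show ?thesis by (intro bounded_imp_bdd_above compact_imp_bounded)
    qed
    have Eb: "\<bar>poly p x\<bar> \<le> E" if "x \<in> {-1..1}" "x \<ge> 1/2" for x
    proof -
      have "D 0 x = 0" using that y by (simp add: D_def)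
      then show ?thesis using cSUP_upper[OF that(1) bdd] by (simp add: E_def supnorm_def)
    qed
    have tb: "t j \<in> {1/2..1}" if "j \<le> n" for j
      using that by (auto simp: t_def field_simps)
    have qb: "\<bar>poly q (t j)\<bar> \<le> 2^r * (E + (1 + real k) * \<beta>)" if "j \<le> n" for j
    proof -
      define x where "x = t j"
      have x: "1/2 \<le> x" "x \<le> 1" using tb[OF that] by (auto simp: x_def)
      have x0: "0 \<le> x" using x(1) by linarith
      have xs: "\<bar>x^s\<bar> \<le> 1" "\<bar>x^(s+2)\<bar> \<le> 1" using power_le_one[OF x0 x(2), of s] power_le_one[OF x0 x(2), of "s+2"] x0
        by (simp_all add: abs_of_nonneg del: power_Suc power_add)
      have ys: "y^3 \<le> 1" "y \<le> 1" using y by (simp_all add: power_le_one)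
      have "\<bar>\<beta> * y^3 * x^s\<bar> \<le> \<beta>"
        using xs ys \<beta> y by (simp add: abs_mult mult_le_one)
      moreover have "\<bar>real k * \<beta> * y * x^(s+2)\<bar> \<le> real k * \<beta>"
      proof -
        have yu: "y * \<bar>x^(s+2)\<bar> \<le> 1" using ys xs y by (intro mult_le_one) auto
        have "real k * \<beta> * (y * \<bar>x^(s+2)\<bar>) \<le> real k * \<beta> * 1"
          using yu \<beta> by (intro mult_left_mono) auto
        moreover have "\<bar>real k * \<beta> * y * x^(s+2)\<bar> = real k * \<beta> * (y * \<bar>x^(s+2)\<bar>)"
          using \<beta> y by (simp add: abs_mult mult.assoc del: power_Suc power_add)
        ultimately show ?thesis by simp
      qed
      ultimately have T0: "\<bar>\<beta> * y^3 * x^s - real k * \<beta> * y * x^(s+2)\<bar> \<le> \<beta> + real k * \<beta>"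
        using abs_triangle_ineq4[of "\<beta> * y^3 * x^s" "real k * \<beta> * y * x^(s+2)"] by linarith
      then have T: "\<bar>\<beta> * y^3 * x^s - real k * \<beta> * y * x^(s+2)\<bar> \<le> (1 + real k) * \<beta>"
        by (simp only: distrib_right mult_1)
      have "x^r * \<bar>poly q x\<bar> = \<bar>poly p x - (\<beta> * y^3 * x^s - real k * \<beta> * y * x^(s+2))\<bar>"
        using x by (simp add: split abs_mult)
      also have "\<dots> \<le> E + (1 + real k) * \<beta>"
        using Eb[of x] x T by simp
      finally have h1: "x^r * \<bar>poly q x\<bar> \<le> E + (1 + real k) * \<beta>" .
      have "(1/2)^r \<le> x^r" using x by (intro power_mono) auto
      then have one: "1 \<le> 2^r * x^r" by (simp add: field_simps)
      have "\<bar>poly q x\<bar> \<le> 2^r * x^r * \<bar>poly q x\<bar>"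
        using mult_right_mono[OF one abs_ge_zero[of "poly q x"]] by simp
      also have "\<dots> \<le> 2^r * (E + (1 + real k) * \<beta>)"
        using h1 by (simp add: mult.assoc)
      finally show ?thesis by (simp add: x_def)
    qed
    have Mb: "supnorm (D r) \<le> K * \<beta>"
      unfolding supnorm_def
    proof (rule cSUP_least)
      fix x :: real assume "x \<in> {-1..1}"
      show "\<bar>D r x\<bar> \<le> K * \<beta>"
      proof (cases "\<bar>x\<bar> < y")
        case True
        then have "x/y \<in> {-1..1}" using y by (auto simp: abs_less_iff field_simps)
        then have "\<bar>poly ((pderiv^^r) H) (x/y)\<bar> \<le> K" using K by auto
        then show ?thesis using True \<beta> by (simp add: D_def g_def \<beta>_def[symmetric] abs_mult mult.commute)
      qed (use K \<beta> in \<open>simp add: D_def\<close>)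
    qed auto
    show ?thesis
    proof (rule ccontr)
      assume "\<not> ?thesis"
      then have "E \<le> A * supnorm (D r)" by (simp add: E_def)
      also have "\<dots> \<le> A * (K * \<beta>)" using Mb assms(4) by (simp add: mult_left_mono)
      finally have EA: "E \<le> A * K * \<beta>" by simp
      have "2 * (real k - 1) * \<beta> \<le> poly q y - poly q (-y)" using q_y q_my by (simp add: algebra_simps)
      also have "\<dots> \<le> (\<Sum>j\<le>n. \<bar>poly q (t j)\<bar> * \<bar>L j y - L j (-y)\<bar>)"
        unfolding diff by (intro sum_mono) (metis abs_ge_self abs_mult)
      also have "\<dots> \<le> (\<Sum>j\<le>n. 2^r * (E + (1 + real k) * \<beta>) * \<bar>L j y - L j (-y)\<bar>)"
        by (intro sum_mono mult_right_mono qb) auto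
      also have "\<dots> = 2^r * (E + (1 + real k) * \<beta>) * \<Phi> y"
        by (simp add: \<Phi>_def sum_distrib_left)
      also have "\<dots> \<le> 2^r * (A * K * \<beta> + (1 + real k) * \<beta>) * \<Phi> y"
        using EA by (intro mult_right_mono) (auto simp: \<Phi>_def)
      also have "\<dots> = \<beta> * (\<Phi> y * (2^r * (A * K + 1 + real k)))"
        by (simp add: algebra_simps)
      also have "\<dots> < \<beta> * 1"
      proof -
        have pos: "2^r * (A * K + 1 + real k) > 0" using AK by simp
        have "\<Phi> y * (2^r * (A * K + 1 + real k)) < \<epsilon> * (2^r * (A * K + 1 + real k))"
          using y(3) pos by (rule mult_strict_right_mono)
        also have "\<dots> = 1" using AK by (simp add: \<epsilon>_def)
        finally show ?thesis using \<beta> by simp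
      qed
      finally have "2 * (real k - 1) * \<beta> < \<beta>" by simp
      moreover have "real k \<ge> 5" using assms(2) by (simp add: k_def)
      ultimately show False using \<beta> by (simp add: algebra_simps)
    qed
  qed
  show ?thesis
    by (rule exI[of _ D]) (use Cr Z N main in blast)
qed
end
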